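(* Let $p_1,\dots,p_m$ be discrete probability distributions each with (at most) $n$ states. Then there exists a minimum-entropy coupling of $p_1,\dots,p_m$ whose support (number of tuples with nonzero probability) has size at most $nm-(m-1)$.
   Context: A coupling of $p_1,\dots,p_m$ is a joint probability distribution $\mathbf P(i_1,\dots,i_m)$ on $[n]^m$ whose $k$-th marginal equals $p_k$ for every $k$ (distributions with fewer states are padded with zero-probability states). A minimum-entropy coupling minimizes the Shannon entropy $\sum_i \mathbf P(i)\log_2(1/\mathbf P(i))$ among all couplings. *)

theory Defs
  imports Main "HOL.Transcendental"
begin

text \<open>States are 0,...,n-1; joint outcomes are tuples (lists) of length m over [n].\<close>

definition tuples :: "nat \<Rightarrow> nat \<Rightarrow> nat list set" where
  "tuples n m = {xs. length xs = m \<and> set xs \<subseteq> {..<n}}"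

text \<open>A probability distribution on [n] (values outside [n] are ignored).\<close>
definition is_dist :: "nat \<Rightarrow> (nat \<Rightarrow> real) \<Rightarrow> bool" where
  "is_dist n q \<longleftrightarrow> (\<forall>i<n. 0 \<le> q i) \<and> (\<Sum>i<n. q i) = 1"

definition is_coupling :: "nat \<Rightarrow> nat \<Rightarrow> (nat \<Rightarrow> nat \<Rightarrow> real) \<Rightarrow> (nat list \<Rightarrow> real) \<Rightarrow> bool" where
  "is_coupling n m p P \<longleftrightarrow>
     (\<forall>xs\<in>tuples n m. 0 \<le> P xs) \<and> (\<Sum>xs\<in>tuples n m. P xs) = 1 \<and>
     (\<forall>k<m. \<forall>i<n. (\<Sum>xs\<in>{xs\<in>tuples n m. xs ! k = i}. P xs) = p k i)"

definition entropy :: "nat \<Rightarrow> nat \<Rightarrow> (nat list \<Rightarrow> real) \<Rightarrow> real" where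
  "entropy n m P = (\<Sum>xs\<in>tuples n m. if P xs = 0 then 0 else P xs * log 2 (1 / P xs))"

definition is_min_entropy_coupling :: "nat \<Rightarrow> nat \<Rightarrow> (nat \<Rightarrow> nat \<Rightarrow> real) \<Rightarrow> (nat list \<Rightarrow> real) \<Rightarrow> bool" where
  "is_min_entropy_coupling n m p P \<longleftrightarrow>
     is_coupling n m p P \<and> (\<forall>Q. is_coupling n m p Q \<longrightarrow> entropy n m P \<le> entropy n m Q)"

definition support :: "nat \<Rightarrow> nat \<Rightarrow> (nat list \<Rightarrow> real) \<Rightarrow> nat list set" where
  "support n m P = {xs\<in>tuples n m. P xs \<noteq> 0}"

end

theory Submission
  imports Defs
begin

lemma underdet:
  assumes "finite E"
  shows "\<And>V (c::'e \<Rightarrow> 'a \<Rightarrow> real). finite V \<Longrightarrow> card E < card V \<Longrightarrow>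
     \<exists>x. (\<forall>u. u \<notin> V \<longrightarrow> x u = 0) \<and> (\<exists>u\<in>V. x u \<noteq> 0) \<and> (\<forall>e\<in>E. (\<Sum>u\<in>V. c e u * x u) = 0)"
  using assms
proof (induction E rule: finite_induct)
  case empty
  then obtain u where u: "u \<in> V" by fastforce
  show ?case by (rule exI[of _ "\<lambda>w. if w = u then 1 else 0"]) (use u in auto)
next
  case (insert e E V c)
  show ?case
  proof (cases "\<forall>u\<in>V. c e u = 0")
    case True
    have "card E < card V" using insert by simp
    from insert.IH[OF insert.prems(1) this, of c] obtain x where
      x: "\<forall>u. u \<notin> V \<longrightarrow> x u = 0" "\<exists>u\<in>V. x u \<noteq> 0" "\<forall>e\<in>E. (\<Sum>u\<in>V. c e u * x u) = 0" by blast
    show ?thesis using x True by (intro exI[of _ x]) auto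
  next
    case False
    then obtain v where v: "v \<in> V" "c e v \<noteq> 0" by blast
    define V' where "V' = V - {v}"
    define c' where "c' = (\<lambda>e' u. c e' u - c e' v / c e v * c e u)"
    have fV': "finite V'" using insert V'_def by simp
    have "card E < card V'" using insert v V'_def by simp
    from insert.IH[OF fV' this, of c'] obtain x' where
      x': "\<forall>u. u \<notin> V' \<longrightarrow> x' u = 0" "\<exists>u\<in>V'. x' u \<noteq> 0" "\<forall>e\<in>E. (\<Sum>u\<in>V'. c' e u * x' u) = 0" by blast
    define Se where "Se = (\<Sum>u\<in>V'. c e u * x' u)"
    define x where "x = (\<lambda>w. if w = v then - Se / c e v else x' w)"
    have split: "(\<Sum>u\<in>V. f u * x u) = f v * x v + (\<Sum>u\<in>V'. f u * x' u)" for f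
    proof -
      have "(\<Sum>u\<in>V. f u * x u) = f v * x v + (\<Sum>u\<in>V'. f u * x u)"
        unfolding V'_def using v insert.prems(1) by (simp add: sum.remove)
      also have "(\<Sum>u\<in>V'. f u * x u) = (\<Sum>u\<in>V'. f u * x' u)"
        by (rule sum.cong) (auto simp: x_def V'_def)
      finally show ?thesis .
    qed
    have "\<forall>u. u \<notin> V \<longrightarrow> x u = 0" using x' v by (auto simp: x_def V'_def)
    moreover have "\<exists>u\<in>V. x u \<noteq> 0" using x'(2) by (auto simp: x_def V'_def)
    moreover have "(\<Sum>u\<in>V. c e' u * x u) = 0" if "e' \<in> insert e E" for e'
    proof (cases "e' = e")
      case True
      then show ?thesis using split[of "c e"] v by (simp add: x_def Se_def)
    next
      case False
      then have "e' \<in> E" using that by simp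
      then have "(\<Sum>u\<in>V'. c' e' u * x' u) = 0" using x' by blast
      then have "(\<Sum>u\<in>V'. c e' u * x' u) - c e' v / c e v * Se = 0"
        unfolding c'_def Se_def by (simp add: algebra_simps sum_subtractf sum_distrib_left)
      then show ?thesis using split[of "c e'"] v by (simp add: x_def)
    qed
    ultimately show ?thesis by blast
  qed
qed

lemma tuples_0: "tuples n 0 = {[]}" by (auto simp: tuples_def)

lemma tuples_Suc: "tuples n (Suc m) = (\<lambda>(x,xs). x#xs) ` ({..<n} \<times> tuples n m)"
  by (auto simp: tuples_def image_iff length_Suc_conv)

lemma finite_tuples: "finite (tuples n m)"
proof -
  have "tuples n m = {xs. set xs \<subseteq> {..<n} \<and> length xs = m}" by (auto simp: tuples_def)
  then show ?thesis using finite_lists_length_eq[of "{..<n}" m] by simp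
qed

lemma sum_prod_tuples:
  "(\<Sum>xs\<in>tuples n m. \<Prod>k<m. f k (xs!k)) = (\<Prod>k<m. \<Sum>i<n. (f k i :: real))"
proof (induction m arbitrary: f)
  case 0
  then show ?case by (simp add: tuples_0)
next
  case (Suc m)
  have inj: "inj_on (\<lambda>(x,xs). x#xs) ({..<n} \<times> tuples n m)" by (auto simp: inj_on_def)
  have "(\<Sum>xs\<in>tuples n (Suc m). \<Prod>k<Suc m. f k (xs!k))
      = (\<Sum>(x,xs)\<in>{..<n} \<times> tuples n m. \<Prod>k<Suc m. f k ((x#xs)!k))"
    unfolding tuples_Suc by (subst sum.reindex[OF inj]) (simp add: case_prod_unfold)
  also have "\<dots> = (\<Sum>(x,xs)\<in>{..<n} \<times> tuples n m. f 0 x * (\<Prod>k<m. f (Suc k) (xs!k)))"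
    by (simp only: prod.lessThan_Suc_shift nth_Cons_0 nth_Cons_Suc)
  also have "\<dots> = (\<Sum>x<n. \<Sum>xs\<in>tuples n m. f 0 x * (\<Prod>k<m. f (Suc k) (xs!k)))"
    by (rule sum.cartesian_product[symmetric])
  also have "\<dots> = (\<Sum>x<n. f 0 x) * (\<Sum>xs\<in>tuples n m. (\<Prod>k<m. f (Suc k) (xs!k)))"
    by (rule sum_product[symmetric])
  also have "\<dots> = (\<Sum>x<n. f 0 x) * (\<Prod>k<m. \<Sum>i<n. f (Suc k) i)"
    using Suc.IH[of "\<lambda>k. f (Suc k)"] by simp
  also have "\<dots> = (\<Prod>k<Suc m. \<Sum>i<n. f k i)"
    by (simp only: prod.lessThan_Suc_shift)
  finally show ?case .
qed

lemma exists_coupling: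
  assumes "\<And>k. k < m \<Longrightarrow> is_dist n (p k)"
  shows "is_coupling n m p (\<lambda>xs. if xs \<in> tuples n m then \<Prod>k<m. p k (xs!k) else 0)"
proof -
  let ?P = "\<lambda>xs. if xs \<in> tuples n m then \<Prod>k<m. p k (xs!k) else 0"
  have nn: "0 \<le> ?P xs" if "xs \<in> tuples n m" for xs
    using that assms by (auto simp: tuples_def is_dist_def subset_iff intro!: prod_nonneg)
  have tot: "(\<Sum>xs\<in>tuples n m. ?P xs) = 1"
    using sum_prod_tuples[where f=p and n=n and m=m] assms by (simp add: is_dist_def)
  have marg: "(\<Sum>xs\<in>{xs\<in>tuples n m. xs ! k = i}. ?P xs) = p k i" if k: "k < m" and i: "i < n" for k i
  proof -
    define f where "f = (\<lambda>j x. if j = k then (if x = i then p j x else 0) else p j x)"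
    have "(\<Sum>xs\<in>{xs\<in>tuples n m. xs ! k = i}. ?P xs) = (\<Sum>xs\<in>tuples n m. \<Prod>j<m. f j (xs!j))"
    proof -
      have "(\<Sum>xs\<in>{xs\<in>tuples n m. xs ! k = i}. ?P xs) = (\<Sum>xs\<in>tuples n m. if xs ! k = i then ?P xs else 0)"
        by (subst sum.inter_filter[OF finite_tuples]) (auto intro!: sum.cong)
      also have "\<dots> = (\<Sum>xs\<in>tuples n m. \<Prod>j<m. f j (xs!j))"
      proof (rule sum.cong[OF refl])
        fix xs assume xs: "xs \<in> tuples n m"
        show "(if xs ! k = i then ?P xs else 0) = (\<Prod>j<m. f j (xs!j))"
        proof (cases "xs ! k = i")
          case True
          then show ?thesis using xs by (auto simp: f_def intro!: prod.cong)
        next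
          case False
          have "f k (xs!k) = 0" using False by (simp add: f_def)
          then have "(\<Prod>j<m. f j (xs!j)) = 0" using k by (meson finite_lessThan lessThan_iff prod_zero)
          then show ?thesis using False by simp
        qed
      qed
      finally show ?thesis .
    qed
    also have "\<dots> = (\<Prod>j<m. \<Sum>x<n. f j x)" by (rule sum_prod_tuples)
    also have "\<dots> = (\<Prod>j<m. if j = k then p k i else 1)"
    proof (rule prod.cong[OF refl])
      fix j assume j: "j \<in> {..<m}"
      show "(\<Sum>x<n. f j x) = (if j = k then p k i else 1)"
        using i assms[of j] j by (auto simp: f_def is_dist_def)
    qed
    also have "\<dots> = p k i" using k by (simp add: prod.delta)
    finally show ?thesis .
  qed
  show ?thesis unfolding is_coupling_def using nn tot marg by blast
qed

definition ent_g :: "real \<Rightarrow> real" where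
  "ent_g x = (if x = 0 then 0 else x * log 2 (1 / x))"

lemma tangent:
  assumes x: "x > 0" and a: "a \<ge> 0"
  shows "ent_g a \<le> a * log 2 (1 / x) + (x - a) / ln 2"
proof (cases "a = 0")
  case True
  then show ?thesis using x by (simp add: ent_g_def)
next
  case False
  then have a0: "a > 0" using a by simp
  have "ent_g a - a * log 2 (1 / x) = a * (ln (x / a) / ln 2)"
    using a0 x by (simp add: ent_g_def log_def ln_div algebra_simps diff_divide_distrib)
  also have "\<dots> \<le> a * ((x / a - 1) / ln 2)"
    using a0 x ln_le_minus_one[of "x / a"]
    by (intro mult_left_mono divide_right_mono) auto
  also have "\<dots> = (x - a) / ln 2" using a0 by (simp add: field_simps)
  finally show ?thesis by simp
qed

lemma concave3:
  assumes a: "a \<ge> 0" and b: "b \<ge> 0" and l: "0 \<le> l" "l \<le> 1"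
  shows "l * ent_g a + (1 - l) * ent_g b \<le> ent_g (l * a + (1 - l) * b)"
proof -
  define x where "x = l * a + (1 - l) * b"
  have x0: "x \<ge> 0" using a b l by (simp add: x_def)
  show ?thesis
  proof (cases "x = 0")
    case True
    have "l * a = 0" "(1 - l) * b = 0" using True a b l unfolding x_def
      by (smt (verit) mult_nonneg_nonneg)+
    then have "l * ent_g a = 0" "(1 - l) * ent_g b = 0" by (auto simp: ent_g_def)
    moreover have "ent_g (l * a + (1 - l) * b) = 0" using True by (simp add: x_def[symmetric] ent_g_def)
    ultimately show ?thesis by (simp only:)
  next
    case False
    then have xp: "x > 0" using x0 by simp
    have "l * ent_g a + (1 - l) * ent_g b \<le>
        l * (a * log 2 (1 / x) + (x - a) / ln 2) + (1 - l) * (b * log 2 (1 / x) + (x - b) / ln 2)"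
      using tangent[OF xp a] tangent[OF xp b] l
      by (intro add_mono mult_left_mono) auto
    also have "\<dots> = x * log 2 (1 / x) + (x - (l * a + (1 - l) * b)) / ln 2"
      by (simp add: x_def algebra_simps add_divide_distrib diff_divide_distrib)
    also have "\<dots> = ent_g x" using xp by (simp add: x_def ent_g_def)
    finally show ?thesis by (simp add: x_def)
  qed
qed

definition marg :: "nat \<Rightarrow> nat \<Rightarrow> (nat list \<Rightarrow> real) \<Rightarrow> nat \<Rightarrow> nat \<Rightarrow> real" where
  "marg n m d k i = (\<Sum>xs\<in>{xs\<in>tuples n m. xs ! k = i}. d xs)"

definition rigid :: "nat \<Rightarrow> nat \<Rightarrow> (nat list \<Rightarrow> real) \<Rightarrow> bool" where
  "rigid n m P = (\<forall>d. (\<forall>xs. xs \<notin> support n m P \<longrightarrow> d xs = 0) \<and> (\<forall>k<m. \<forall>i<n. marg n m d k i = 0)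
      \<longrightarrow> (\<forall>xs. d xs = 0))"

definition normal :: "nat \<Rightarrow> nat \<Rightarrow> (nat list \<Rightarrow> real) \<Rightarrow> bool" where
  "normal n m P = (\<forall>xs. xs \<notin> tuples n m \<longrightarrow> P xs = 0)"

lemma total_marg:
  assumes "k < m"
  shows "(\<Sum>xs\<in>tuples n m. d xs) = (\<Sum>i<n. marg n m d k i)"
  unfolding marg_def
proof (rule sum.group[symmetric])
  show "finite (tuples n m)" by (rule finite_tuples)
  show "finite {..<n}" by simp
  show "(\<lambda>xs. xs ! k) ` tuples n m \<subseteq> {..<n}"
    using assms by (auto simp: tuples_def subset_iff)
qed

lemma support_sub: "support n m P \<subseteq> tuples n m" by (auto simp: support_def)

lemma finite_support: "finite (support n m P)"
  using finite_subset[OF support_sub finite_tuples] .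

lemma marg_add: "marg n m (\<lambda>xs. Q xs + t * d xs) k i = marg n m Q k i + t * marg n m d k i"
  by (simp add: marg_def sum.distrib sum_distrib_left)

lemma marg_coupling: "is_coupling n m p Q \<Longrightarrow> k < m \<Longrightarrow> i < n \<Longrightarrow> marg n m Q k i = p k i"
  by (simp add: is_coupling_def marg_def)

lemma entropy_g: "entropy n m P = (\<Sum>xs\<in>tuples n m. ent_g (P xs))"
  by (simp add: entropy_def ent_g_def)

lemma step:
  assumes cQ: "is_coupling n m p Q" and nQ: "normal n m Q" and m1: "m \<ge> 1"
    and dz: "\<forall>xs. xs \<notin> support n m Q \<longrightarrow> d xs = 0"
    and dm: "\<forall>k<m. \<forall>i<n. marg n m d k i = 0"
    and neg: "u0 \<in> support n m Q" "d u0 < 0"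
  shows "\<exists>t>0. is_coupling n m p (\<lambda>xs. Q xs + t * d xs) \<and> normal n m (\<lambda>xs. Q xs + t * d xs)
     \<and> card (support n m (\<lambda>xs. Q xs + t * d xs)) < card (support n m Q)"
proof -
  let ?S = "support n m Q"
  define R where "R = (\<lambda>u. Q u / (- d u)) ` {u\<in>?S. d u < 0}"
  have fR: "finite R" unfolding R_def using finite_support by simp
  have neR: "R \<noteq> {}" unfolding R_def using neg by auto
  define a where "a = Min R"
  have "a \<in> R" unfolding a_def using fR neR by (rule Min_in)
  then obtain u1 where u1: "u1 \<in> ?S" "d u1 < 0" "a = Q u1 / (- d u1)" unfolding R_def by auto
  have Qnn: "\<And>u. u \<in> tuples n m \<Longrightarrow> Q u \<ge> 0" using cQ by (simp add: is_coupling_def)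
  have "Q u1 > 0" using u1(1) Qnn[of u1] by (auto simp: support_def)
  then have apos: "a > 0" using u1 by (simp add: divide_pos_neg)
  let ?Q' = "\<lambda>xs. Q xs + a * d xs"
  have nn: "?Q' u \<ge> 0" if "u \<in> tuples n m" for u
  proof (cases "d u < 0")
    case True
    then have "u \<in> ?S" using dz by force
    then have "a \<le> Q u / (- d u)" unfolding a_def using fR True by (intro Min_le) (auto simp: R_def)
    then have "a * (- d u) \<le> Q u / (- d u) * (- d u)" using True by (intro mult_right_mono) auto
    then have "a * (- d u) \<le> Q u" using True by simp
    then show ?thesis by simp
  next
    case False
    then show ?thesis using Qnn[OF that] apos by simp
  qed
  have totd: "(\<Sum>xs\<in>tuples n m. d xs) = 0"
    using total_marg[of 0 m d n] m1 dm by simp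
  have tot: "(\<Sum>xs\<in>tuples n m. ?Q' xs) = 1"
  proof -
    have "(\<Sum>xs\<in>tuples n m. ?Q' xs) = (\<Sum>xs\<in>tuples n m. Q xs) + a * (\<Sum>xs\<in>tuples n m. d xs)"
      by (simp add: sum.distrib sum_distrib_left)
    then show ?thesis using cQ totd by (simp add: is_coupling_def)
  qed
  have mg: "\<forall>k<m. \<forall>i<n. (\<Sum>xs\<in>{xs\<in>tuples n m. xs ! k = i}. ?Q' xs) = p k i"
  proof (intro allI impI)
    fix k i assume "k < m" "i < n"
    then show "(\<Sum>xs\<in>{xs\<in>tuples n m. xs ! k = i}. ?Q' xs) = p k i"
      using marg_add[of n m Q a d k i] marg_coupling[OF cQ, of k i] dm unfolding marg_def by simp
  qed
  have c': "is_coupling n m p ?Q'" unfolding is_coupling_def using nn tot mg by blast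
  have n': "normal n m ?Q'" unfolding normal_def
  proof (intro allI impI)
    fix xs assume "xs \<notin> tuples n m"
    then have "xs \<notin> ?S" "Q xs = 0" using nQ by (auto simp: normal_def support_def)
    then show "Q xs + a * d xs = 0" using dz by simp
  qed
  have "support n m ?Q' \<subseteq> ?S - {u1}"
  proof
    fix u assume u: "u \<in> support n m ?Q'"
    then have ut: "u \<in> tuples n m" by (auto simp: support_def)
    have "u \<in> ?S"
    proof (rule ccontr)
      assume "u \<notin> ?S"
      then have "d u = 0" "Q u = 0" using dz ut by (auto simp: support_def)
      then show False using u by (simp add: support_def)
    qed
    moreover have "u \<noteq> u1" using u u1 by (auto simp: support_def)
    ultimately show "u \<in> ?S - {u1}" by simp
  qed
  then have "support n m ?Q' \<subset> ?S" using u1(1) by blast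
  then have "card (support n m ?Q') < card ?S" using finite_support by (rule psubset_card_mono[rotated])
  then show ?thesis using apos c' n' by blast
qed

lemma marg_neg: "marg n m (\<lambda>xs. - d xs) k i = - marg n m d k i"
  by (simp add: marg_def sum_negf)

lemma reduce:
  assumes m1: "m \<ge> 1"
  shows "is_coupling n m p Q \<Longrightarrow> normal n m Q \<Longrightarrow>
    \<exists>P. is_coupling n m p P \<and> normal n m P \<and> rigid n m P \<and> entropy n m P \<le> entropy n m Q"
proof (induction "card (support n m Q)" arbitrary: Q rule: less_induct)
  case less
  let ?S = "support n m Q"
  show ?case
  proof (cases "rigid n m Q")
    case True
    then show ?thesis using less.prems by blast
  next
    case False
    then obtain d u0 where dz: "\<forall>xs. xs \<notin> ?S \<longrightarrow> d xs = 0"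
      and dm: "\<forall>k<m. \<forall>i<n. marg n m d k i = 0" and du0: "d u0 \<noteq> 0"
      unfolding rigid_def by blast
    have u0S: "u0 \<in> ?S" using dz du0 by metis
    have totd: "(\<Sum>xs\<in>tuples n m. d xs) = 0"
      using total_marg[of 0 m d n] m1 dm by simp
    have sumS: "(\<Sum>u\<in>?S. d u) = 0"
    proof -
      have "(\<Sum>u\<in>?S. d u) = (\<Sum>u\<in>tuples n m. d u)"
      proof (rule sum.mono_neutral_left[OF finite_tuples support_sub])
        show "\<forall>i\<in>tuples n m - ?S. d i = 0" using dz by simp
      qed
      then show ?thesis using totd by simp
    qed
    have ex_neg: "\<exists>u\<in>?S. d u < 0"
    proof (rule ccontr)
      assume "\<not> ?thesis"
      then have "\<forall>u\<in>?S. d u \<ge> 0" by auto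
      then have "\<forall>u\<in>?S. d u = 0" using sumS sum_nonneg_eq_0_iff[OF finite_support, where f=d] by simp
      then show False using u0S du0 by blast
    qed
    have ex_pos: "\<exists>u\<in>?S. - d u < 0"
    proof (rule ccontr)
      assume "\<not> ?thesis"
      then have "\<forall>u\<in>?S. - d u \<ge> 0" by auto
      moreover have "(\<Sum>u\<in>?S. - d u) = 0" using sumS by (simp add: sum_negf)
      ultimately have "\<forall>u\<in>?S. - d u = 0" using sum_nonneg_eq_0_iff[OF finite_support, where f="\<lambda>u. - d u"] by simp
      then show False using u0S du0 by simp
    qed
    from ex_neg obtain u1 where u1: "u1 \<in> ?S" "d u1 < 0" by blast
    from step[OF less.prems(1,2) m1 dz dm u1] obtain a where a: "a > 0"
      "is_coupling n m p (\<lambda>xs. Q xs + a * d xs)" "normal n m (\<lambda>xs. Q xs + a * d xs)"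
      "card (support n m (\<lambda>xs. Q xs + a * d xs)) < card ?S" by blast
    from ex_pos obtain u2 where u2: "u2 \<in> ?S" "- d u2 < 0" by blast
    have dz': "\<forall>xs. xs \<notin> ?S \<longrightarrow> - d xs = 0" using dz by simp
    have dm': "\<forall>k<m. \<forall>i<n. marg n m (\<lambda>xs. - d xs) k i = 0" using dm marg_neg by simp
    from step[OF less.prems(1,2) m1 dz' dm' u2] obtain b where b: "b > 0"
      "is_coupling n m p (\<lambda>xs. Q xs + b * - d xs)" "normal n m (\<lambda>xs. Q xs + b * - d xs)"
      "card (support n m (\<lambda>xs. Q xs + b * - d xs)) < card ?S" by blast
    define Q1 where "Q1 = (\<lambda>xs. Q xs + a * d xs)"
    define Q2 where "Q2 = (\<lambda>xs. Q xs + b * - d xs)"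
    define l where "l = b / (a + b)"
    have l01: "0 \<le> l" "l \<le> 1" using a b by (auto simp: l_def)
    have comb: "Q u = l * Q1 u + (1 - l) * Q2 u" for u
    proof -
      have "1 - l = a / (a + b)" using a b by (simp add: l_def field_simps)
      then have e: "l * a - (1 - l) * b = 0" using a b by (simp add: l_def field_simps)
      have "l * Q1 u + (1 - l) * Q2 u = Q u + (l * a - (1 - l) * b) * d u"
        by (simp add: Q1_def Q2_def algebra_simps)
      then show ?thesis using e by simp
    qed
    have nn1: "u \<in> tuples n m \<Longrightarrow> Q1 u \<ge> 0" for u using a(2) by (simp add: Q1_def is_coupling_def)
    have nn2: "u \<in> tuples n m \<Longrightarrow> Q2 u \<ge> 0" for u using b(2) by (simp add: Q2_def is_coupling_def)
    have "l * entropy n m Q1 + (1 - l) * entropy n m Q2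
        = (\<Sum>u\<in>tuples n m. l * ent_g (Q1 u) + (1 - l) * ent_g (Q2 u))"
      by (simp add: entropy_g sum.distrib sum_distrib_left)
    also have "\<dots> \<le> (\<Sum>u\<in>tuples n m. ent_g (l * Q1 u + (1 - l) * Q2 u))"
      using nn1 nn2 l01 by (intro sum_mono concave3) auto
    also have "\<dots> = entropy n m Q" using comb by (simp add: entropy_g)
    finally have conc: "l * entropy n m Q1 + (1 - l) * entropy n m Q2 \<le> entropy n m Q" .
    show ?thesis
    proof (cases "entropy n m Q1 \<le> entropy n m Q2")
      case True
      then have "(1 - l) * entropy n m Q1 \<le> (1 - l) * entropy n m Q2"
        using l01 by (intro mult_left_mono) auto
      then have le: "entropy n m Q1 \<le> entropy n m Q" using conc by (simp add: algebra_simps)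
      obtain P where "is_coupling n m p P \<and> normal n m P \<and> rigid n m P \<and> entropy n m P \<le> entropy n m Q1"
        using less.hyps[OF a(4) a(2,3)] unfolding Q1_def by blast
      with le show ?thesis by (meson order_trans)
    next
      case False
      then have "l * entropy n m Q2 \<le> l * entropy n m Q1"
        using l01 by (intro mult_left_mono) auto
      then have le: "entropy n m Q2 \<le> entropy n m Q" using conc by (simp add: algebra_simps)
      obtain P where "is_coupling n m p P \<and> normal n m P \<and> rigid n m P \<and> entropy n m P \<le> entropy n m Q2"
        using less.hyps[OF b(4) b(2,3)] unfolding Q2_def by blast
      with le show ?thesis by (meson order_trans)
    qed
  qed
qed

lemma marg_S:
  assumes "\<forall>xs. xs \<notin> support n m P \<longrightarrow> x xs = 0"
  shows "marg n m x k i = (\<Sum>u\<in>support n m P. (if u ! k = i then 1 else 0) * x u)"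
proof -
  have "(\<Sum>u\<in>tuples n m. (if u ! k = i then 1 else 0) * x u) = (\<Sum>u\<in>tuples n m. if u ! k = i then x u else 0)"
    by (intro sum.cong) auto
  also have "\<dots> = marg n m x k i" unfolding marg_def by (rule sum.inter_filter[OF finite_tuples, symmetric])
  finally have "marg n m x k i = (\<Sum>u\<in>tuples n m. (if u ! k = i then 1 else 0) * x u)" by simp
  also have "\<dots> = (\<Sum>u\<in>support n m P. (if u ! k = i then 1 else 0) * x u)"
  proof (rule sum.mono_neutral_right[OF finite_tuples support_sub])
    show "\<forall>j\<in>tuples n m - support n m P. (if j ! k = i then 1 else 0) * x j = 0" using assms by simp
  qed
  finally show ?thesis .
qed

lemma rigid_card:
  assumes m1: "m \<ge> 1" and n1: "n \<ge> 1" and r: "rigid n m P"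
  shows "card (support n m P) \<le> n * m - (m - 1)"
proof (rule ccontr)
  let ?S = "support n m P"
  assume "\<not> ?thesis"
  then have big: "n * m - (m - 1) < card ?S" by simp
  define E where "E = ({0} \<times> {..<n}) \<union> ({1..<m} \<times> {..<n-1})"
  have fE: "finite E" by (simp add: E_def)
  have "card E = n + (m - 1) * (n - 1)"
  proof -
    have "({0} \<times> {..<n}) \<inter> ({1..<m} \<times> {..<n-1}) = {}" by auto
    then have "card E = card ({0::nat} \<times> {..<n}) + card ({1..<m} \<times> {..<n-1})"
      unfolding E_def by (intro card_Un_disjoint) auto
    then show ?thesis by (simp add: card_cartesian_product)
  qed
  also have "\<dots> = n * m - (m - 1)"
  proof -
    obtain n' where n': "n = Suc n'" using n1 by (cases n) auto
    obtain m' where m': "m = Suc m'" using m1 by (cases m) auto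
    from n' m' show ?thesis by (simp add: algebra_simps)
  qed
  finally have cE: "card E < card ?S" using big by simp
  define c where "c = (\<lambda>(k, i) (u::nat list). if u ! k = i then 1 else (0::real))"
  obtain x where x: "\<forall>u. u \<notin> ?S \<longrightarrow> x u = 0" "\<exists>u\<in>?S. x u \<noteq> 0"
    "\<forall>e\<in>E. (\<Sum>u\<in>?S. c e u * x u) = 0"
    using underdet[OF fE finite_support cE, of c] by blast
  have mE: "marg n m x k i = 0" if "(k, i) \<in> E" for k i
  proof -
    have "(\<Sum>u\<in>?S. c (k, i) u * x u) = 0" using x(3) that by blast
    then show ?thesis using marg_S[OF x(1), of k i] by (simp add: c_def)
  qed
  have tot: "(\<Sum>xs\<in>tuples n m. x xs) = 0"
    using total_marg[of 0 m x n] m1 mE by (simp add: E_def)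
  have all: "\<forall>k<m. \<forall>i<n. marg n m x k i = 0"
  proof (intro allI impI)
    fix k i assume k: "k < m" and i: "i < n"
    show "marg n m x k i = 0"
    proof (cases "k = 0 \<or> i < n - 1")
      case True
      then have "(k, i) \<in> E" using k i by (auto simp: E_def)
      then show ?thesis by (rule mE)
    next
      case False
      then have k1: "k \<ge> 1" and ii: "i = n - 1" using i by auto
      have n_eq: "n = Suc (n - 1)" using n1 by simp
      have "(\<Sum>i<n. marg n m x k i) = 0" using total_marg[of k m x n] k tot by simp
      also have "(\<Sum>i<n. marg n m x k i) = (\<Sum>i<n-1. marg n m x k i) + marg n m x k (n - 1)"
        by (subst n_eq) (simp only: sum.lessThan_Suc diff_Suc_1)
      also have "(\<Sum>i<n-1. marg n m x k i) = 0"
        using k k1 by (intro sum.neutral) (auto intro!: mE simp: E_def)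
      finally show ?thesis using ii by simp
    qed
  qed
  have "\<forall>xs. x xs = 0" using r x(1) all unfolding rigid_def by blast
  then show False using x(2) by simp
qed

theorem lemma1:
  fixes n m :: nat and p :: "nat \<Rightarrow> nat \<Rightarrow> real"
  assumes "m \<ge> 1"
    and "\<And>k. k < m \<Longrightarrow> is_dist n (p k)"
  shows "\<exists>P. is_min_entropy_coupling n m p P \<and> card (support n m P) \<le> n * m - (m - 1)"
proof -
  have m1: "m \<ge> 1" by fact
  have n1: "n \<ge> 1"
  proof (rule ccontr)
    assume "\<not> n \<ge> 1"
    then have "n = 0" by simp
    then show False using assms(2)[of 0] m1 by (simp add: is_dist_def)
  qed
  define C0 where "C0 = {P. is_coupling n m p P \<and> normal n m P \<and> rigid n m P}"
  have inj: "inj_on (support n m) C0"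
  proof (rule inj_onI)
    fix P1 P2 assume P1: "P1 \<in> C0" and P2: "P2 \<in> C0" and eq: "support n m P1 = support n m P2"
    define d where "d = (\<lambda>xs. P1 xs - P2 xs)"
    have dz: "\<forall>xs. xs \<notin> support n m P1 \<longrightarrow> d xs = 0"
    proof (intro allI impI)
      fix xs assume xs: "xs \<notin> support n m P1"
      show "d xs = 0"
      proof (cases "xs \<in> tuples n m")
        case True
        then have "P1 xs = 0" "P2 xs = 0" using xs eq by (auto simp: support_def)
        then show ?thesis by (simp add: d_def)
      next
        case False
        then show ?thesis using P1 P2 by (simp add: C0_def normal_def d_def)
      qed
    qed
    have dm: "\<forall>k<m. \<forall>i<n. marg n m d k i = 0"
    proof (intro allI impI)
      fix k i assume "k < m" "i < n"
      then have "marg n m P1 k i = p k i" "marg n m P2 k i = p k i"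
        using P1 P2 marg_coupling by (auto simp: C0_def)
      then show "marg n m d k i = 0" by (simp add: d_def marg_def sum_subtractf)
    qed
    have "\<forall>xs. d xs = 0" using P1 dz dm by (simp add: C0_def rigid_def)
    then show "P1 = P2" by (auto simp: d_def)
  qed
  have fC0: "finite C0"
    using inj_on_finite[OF inj, of "Pow (tuples n m)"] support_sub finite_tuples by auto
  define P0 where "P0 = (\<lambda>xs. if xs \<in> tuples n m then \<Prod>k<m. p k (xs!k) else 0)"
  have cP0: "is_coupling n m p P0" unfolding P0_def by (rule exists_coupling) (rule assms(2))
  have nP0: "normal n m P0" by (simp add: P0_def normal_def)
  obtain P' where "P' \<in> C0" using reduce[OF m1 cP0 nP0] by (auto simp: C0_def)
  then have neC0: "C0 \<noteq> {}" by blast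
  define e where "e = Min (entropy n m ` C0)"
  have "e \<in> entropy n m ` C0" unfolding e_def using fC0 neC0 by (intro Min_in) auto
  then obtain P where P: "P \<in> C0" "entropy n m P = e" by blast
  have Pmin: "entropy n m P \<le> entropy n m Q" if "Q \<in> C0" for Q
    using P(2) fC0 that unfolding e_def by (auto intro: Min_le)
  have "entropy n m P \<le> entropy n m Q" if cQ: "is_coupling n m p Q" for Q
  proof -
    define Q' where "Q' = (\<lambda>xs. if xs \<in> tuples n m then Q xs else 0)"
    have s: "(\<Sum>xs\<in>A. Q' xs) = (\<Sum>xs\<in>A. Q xs)" if "A \<subseteq> tuples n m" for A
      using that by (intro sum.cong) (auto simp: Q'_def)
    have cQ': "is_coupling n m p Q'"
      using cQ unfolding is_coupling_def
      by (simp add: s Q'_def)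
    have nQ': "normal n m Q'" by (simp add: Q'_def normal_def)
    have eQ: "entropy n m Q' = entropy n m Q"
      unfolding entropy_def by (intro sum.cong) (auto simp: Q'_def)
    obtain R where R: "R \<in> C0" "entropy n m R \<le> entropy n m Q'"
      using reduce[OF m1 cQ' nQ'] by (auto simp: C0_def)
    then show ?thesis using Pmin[OF R(1)] eQ by simp
  qed
  then have "is_min_entropy_coupling n m p P"
    using P(1) by (auto simp: is_min_entropy_coupling_def C0_def)
  moreover have "card (support n m P) \<le> n * m - (m - 1)"
    using rigid_card[OF m1 n1] P(1) by (simp add: C0_def)
  ultimately show ?thesis by blast
qed

end
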